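(* Let $\Omega,\Omega_1$ be prime ideals of $\mathcal S$ with tautological highest weights $\lambda=\lambda_\Omega$ and $\lambda_1=\lambda_{\Omega_1}$. (1) If $\Omega_1=v.\Omega$ with $v\in W^\lambda$, then $B_{\lambda_1}=vB_\lambda$. (2) If in addition $u\in W^{\lambda_1}$, then $uv\in W^\lambda$.
   Context: $F$ is an algebraically closed field of characteristic zero; $\mathfrak g$ is a semisimple Lie algebra over $F$ with Cartan subalgebra $\mathfrak h$, root system $R$, positive system $R^+$, Weyl group $W$, $\rho=\frac12\sum_{\alpha\in R^+}\alpha$, dot action $w.\xi=w(\xi+\rho)-\rho$; $H_\alpha$ is the coroot of $\alpha$. $\mathcal S=S(\mathfrak h)$ is identified with polynomial functions on $\mathfrak h^*$, with $(w.f)(\xi)=f(w^{-1}.\xi)$ and $w.\Omega=\{w.f:f\in\Omega\}$. For a prime $\Omega$, $\mathbb F$ is the fraction field of $\mathcal S/\Omega$ and $\lambda_\Omega$ the $\mathbb F$-linear extension of $\mathfrak h\hookrightarrow\mathcal S\to\mathcal S/\Omega\hookrightarrow\mathbb F$. For $\lambda=\lambda_\Omega$: $R_\lambda=\{\alpha\in R: H_\alpha-n\in\Omega\text{ for some }n\in\mathbb Z\}$, $R^+_\lambda=R^+\cap R_\lambda$, $B_\lambda$ the simple roots of $R_\lambda$ in $R^+_\lambda$, $W^\lambda=\{w\in W:w(B_\lambda)\subseteq R^+\}$. *)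

theory Defs
  imports "HOL-Computational_Algebra.Polynomial"
begin

definition alg_closed :: "'a::field_char_0 itself \<Rightarrow> bool" where
  "alg_closed _ \<longleftrightarrow> (\<forall>p::'a poly. degree p > 0 \<longrightarrow> (\<exists>x. poly p x = 0))"

text \<open>h* is modelled as coordinate vectors 'i \<Rightarrow> 'a over a finite index type 'i.\<close>
definition vadd :: "('i \<Rightarrow> 'a::field) \<Rightarrow> ('i \<Rightarrow> 'a) \<Rightarrow> 'i \<Rightarrow> 'a" where
  "vadd x y = (\<lambda>i. x i + y i)"

definition vsub :: "('i \<Rightarrow> 'a::field) \<Rightarrow> ('i \<Rightarrow> 'a) \<Rightarrow> 'i \<Rightarrow> 'a" where
  "vsub x y = (\<lambda>i. x i - y i)"

definition vscale :: "'a::field \<Rightarrow> ('i \<Rightarrow> 'a) \<Rightarrow> 'i \<Rightarrow> 'a" where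
  "vscale c x = (\<lambda>i. c * x i)"

definition lincomb :: "(('i \<Rightarrow> 'a::field) \<Rightarrow> 'a) \<Rightarrow> ('i \<Rightarrow> 'a) set \<Rightarrow> 'i \<Rightarrow> 'a" where
  "lincomb c B = (\<lambda>i. \<Sum>b\<in>B. c b * b i)"

definition lin_indep :: "('i \<Rightarrow> 'a::field) set \<Rightarrow> bool" where
  "lin_indep B \<longleftrightarrow> finite B \<and> (\<forall>c. lincomb c B = (\<lambda>_. 0) \<longrightarrow> (\<forall>b\<in>B. c b = 0))"

text \<open>Reflection in the root alpha, using the coroot H_alpha = cor alpha (a linear form on h*).\<close>
definition refl :: "(('i \<Rightarrow> 'a::field) \<Rightarrow> ('i \<Rightarrow> 'a) \<Rightarrow> 'a) \<Rightarrow> ('i \<Rightarrow> 'a) \<Rightarrow> ('i \<Rightarrow> 'a) \<Rightarrow> 'i \<Rightarrow> 'a" where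
  "refl cor \<alpha> \<xi> = vsub \<xi> (vscale (cor \<alpha> \<xi>) \<alpha>)"

text \<open>Reduced crystallographic root system R in h* spanning h*, with coroots cor.
  (These are exactly the root systems of semisimple Lie algebras over F.)\<close>
definition root_system :: "('i \<Rightarrow> 'a::field_char_0) set \<Rightarrow> (('i \<Rightarrow> 'a) \<Rightarrow> ('i \<Rightarrow> 'a) \<Rightarrow> 'a) \<Rightarrow> bool" where
  "root_system R cor \<longleftrightarrow>
     finite R \<and> (\<lambda>_. 0) \<notin> R \<and>
     (\<forall>\<xi>. \<exists>c. \<xi> = lincomb c R) \<and>
     (\<forall>\<alpha>\<in>R. (\<forall>x y. cor \<alpha> (vadd x y) = cor \<alpha> x + cor \<alpha> y) \<and>
              (\<forall>c x. cor \<alpha> (vscale c x) = c * cor \<alpha> x) \<and>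
              cor \<alpha> \<alpha> = 2) \<and>
     (\<forall>\<alpha>\<in>R. \<forall>\<beta>\<in>R. refl cor \<alpha> \<beta> \<in> R) \<and>
     (\<forall>\<alpha>\<in>R. \<forall>\<beta>\<in>R. \<exists>n::int. cor \<alpha> \<beta> = of_int n) \<and>
     (\<forall>\<alpha>\<in>R. \<forall>c. vscale c \<alpha> \<in> R \<longrightarrow> c = 1 \<or> c = -1)"

definition is_base :: "('i \<Rightarrow> 'a::field_char_0) set \<Rightarrow> ('i \<Rightarrow> 'a) set \<Rightarrow> bool" where
  "is_base R B \<longleftrightarrow> B \<subseteq> R \<and> lin_indep B \<and>
     (\<forall>\<alpha>\<in>R. \<exists>c::('i \<Rightarrow> 'a) \<Rightarrow> nat.
        \<alpha> = lincomb (\<lambda>b. of_nat (c b)) B \<or> \<alpha> = lincomb (\<lambda>b. - of_nat (c b)) B)"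

definition positive_system :: "('i \<Rightarrow> 'a::field_char_0) set \<Rightarrow> ('i \<Rightarrow> 'a) set \<Rightarrow> bool" where
  "positive_system R P \<longleftrightarrow> (\<exists>B. is_base R B \<and>
      P = {\<alpha>\<in>R. \<exists>c::('i \<Rightarrow> 'a) \<Rightarrow> nat. \<alpha> = lincomb (\<lambda>b. of_nat (c b)) B})"

definition rho :: "('i \<Rightarrow> 'a::field_char_0) set \<Rightarrow> 'i \<Rightarrow> 'a" where
  "rho P = (\<lambda>i. (\<Sum>\<alpha>\<in>P. \<alpha> i) / 2)"

inductive_set weyl :: "('i \<Rightarrow> 'a::field) set \<Rightarrow> (('i \<Rightarrow> 'a) \<Rightarrow> ('i \<Rightarrow> 'a) \<Rightarrow> 'a)
    \<Rightarrow> (('i \<Rightarrow> 'a) \<Rightarrow> ('i \<Rightarrow> 'a)) set"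
  for R cor where
  weyl_id: "id \<in> weyl R cor"
| weyl_step: "w \<in> weyl R cor \<Longrightarrow> \<alpha> \<in> R \<Longrightarrow> refl cor \<alpha> \<circ> w \<in> weyl R cor"

definition dot :: "('i \<Rightarrow> 'a::field_char_0) set \<Rightarrow> (('i \<Rightarrow> 'a) \<Rightarrow> ('i \<Rightarrow> 'a)) \<Rightarrow> ('i \<Rightarrow> 'a) \<Rightarrow> 'i \<Rightarrow> 'a" where
  "dot P w \<xi> = vsub (w (vadd \<xi> (rho P))) (rho P)"

definition dotf :: "('i \<Rightarrow> 'a::field_char_0) set \<Rightarrow> (('i \<Rightarrow> 'a) \<Rightarrow> ('i \<Rightarrow> 'a))
     \<Rightarrow> (('i \<Rightarrow> 'a) \<Rightarrow> 'a) \<Rightarrow> ('i \<Rightarrow> 'a) \<Rightarrow> 'a" where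
  "dotf P w f = (\<lambda>\<xi>. f (dot P (inv w) \<xi>))"

text \<open>S = S(h), identified with the polynomial functions on h*.\<close>
inductive_set polyfun :: "(('i \<Rightarrow> 'a::field) \<Rightarrow> 'a) set" where
  pf_const: "(\<lambda>_. c) \<in> polyfun"
| pf_coord: "(\<lambda>\<xi>. \<xi> i) \<in> polyfun"
| pf_add: "f \<in> polyfun \<Longrightarrow> g \<in> polyfun \<Longrightarrow> (\<lambda>\<xi>. f \<xi> + g \<xi>) \<in> polyfun"
| pf_mult: "f \<in> polyfun \<Longrightarrow> g \<in> polyfun \<Longrightarrow> (\<lambda>\<xi>. f \<xi> * g \<xi>) \<in> polyfun"

definition prime_ideal :: "(('i \<Rightarrow> 'a::field) \<Rightarrow> 'a) set \<Rightarrow> bool" where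
  "prime_ideal Q \<longleftrightarrow> Q \<subseteq> polyfun \<and> (\<lambda>_. 0) \<in> Q \<and>
     (\<forall>f\<in>Q. \<forall>g\<in>Q. (\<lambda>\<xi>. f \<xi> + g \<xi>) \<in> Q) \<and>
     (\<forall>f\<in>Q. \<forall>g\<in>polyfun. (\<lambda>\<xi>. g \<xi> * f \<xi>) \<in> Q) \<and>
     Q \<noteq> polyfun \<and>
     (\<forall>f\<in>polyfun. \<forall>g\<in>polyfun. (\<lambda>\<xi>. f \<xi> * g \<xi>) \<in> Q \<longrightarrow> f \<in> Q \<or> g \<in> Q)"

text \<open>R_lambda for lambda = lambda_Omega: roots alpha with H_alpha - n in Omega for some integer n.\<close>
definition integral_roots :: "('i \<Rightarrow> 'a::field_char_0) set \<Rightarrow> (('i \<Rightarrow> 'a) \<Rightarrow> ('i \<Rightarrow> 'a) \<Rightarrow> 'a)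
     \<Rightarrow> (('i \<Rightarrow> 'a) \<Rightarrow> 'a) set \<Rightarrow> ('i \<Rightarrow> 'a) set" where
  "integral_roots R cor Q = {\<alpha>\<in>R. \<exists>n::int. (\<lambda>\<xi>. cor \<alpha> \<xi> - of_int n) \<in> Q}"

definition simple_roots :: "('i \<Rightarrow> 'a::field) set \<Rightarrow> ('i \<Rightarrow> 'a) set" where
  "simple_roots Pos = {\<alpha>\<in>Pos. \<not> (\<exists>\<beta>\<in>Pos. \<exists>\<gamma>\<in>Pos. \<alpha> = vadd \<beta> \<gamma>)}"

definition B_lam :: "('i \<Rightarrow> 'a::field_char_0) set \<Rightarrow> (('i \<Rightarrow> 'a) \<Rightarrow> ('i \<Rightarrow> 'a) \<Rightarrow> 'a)
     \<Rightarrow> ('i \<Rightarrow> 'a) set \<Rightarrow> (('i \<Rightarrow> 'a) \<Rightarrow> 'a) set \<Rightarrow> ('i \<Rightarrow> 'a) set" where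
  "B_lam R cor P Q = simple_roots (P \<inter> integral_roots R cor Q)"

definition W_lam :: "('i \<Rightarrow> 'a::field_char_0) set \<Rightarrow> (('i \<Rightarrow> 'a) \<Rightarrow> ('i \<Rightarrow> 'a) \<Rightarrow> 'a)
     \<Rightarrow> ('i \<Rightarrow> 'a) set \<Rightarrow> (('i \<Rightarrow> 'a) \<Rightarrow> 'a) set \<Rightarrow> (('i \<Rightarrow> 'a) \<Rightarrow> ('i \<Rightarrow> 'a)) set" where
  "W_lam R cor P Q = {w \<in> weyl R cor. w ` B_lam R cor P Q \<subseteq> P}"

end

theory Submission
  imports Defs
begin


definition lin :: "(('i \<Rightarrow> 'a::field) \<Rightarrow> 'a) \<Rightarrow> bool" where
  "lin f \<longleftrightarrow> (\<forall>x y. f (vadd x y) = f x + f y) \<and> (\<forall>c x. f (vscale c x) = c * f x)"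

definition linop :: "(('i \<Rightarrow> 'a::field) \<Rightarrow> ('i \<Rightarrow> 'a)) \<Rightarrow> bool" where
  "linop w \<longleftrightarrow> (\<forall>x y. w (vadd x y) = vadd (w x) (w y)) \<and> (\<forall>c x. w (vscale c x) = vscale c (w x))"

definition vneg :: "('i \<Rightarrow> 'a::field) \<Rightarrow> 'i \<Rightarrow> 'a" where
  "vneg x = (\<lambda>i. - x i)"

lemma vsub_as: "vsub x y = vadd x (vscale (-1) y)"
  by (simp add: vsub_def vadd_def vscale_def)

lemma vneg_as: "vneg x = vscale (-1) x"
  by (simp add: vneg_def vscale_def)

lemma lin_zero:
  fixes f :: "('i \<Rightarrow> 'a::field) \<Rightarrow> 'a"
  assumes "lin f" shows "f (\<lambda>_. 0) = 0"
proof -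
  have "(\<lambda>_. 0) = vscale 0 (\<lambda>_. (0::'a))" by (simp add: vscale_def)
  then show ?thesis using \<open>lin f\<close> unfolding lin_def by (metis mult_zero_left)
qed

lemma lin_vsub: "lin f \<Longrightarrow> f (vsub x y) = f x - f y"
  unfolding vsub_as lin_def by simp

lemma lin_neg: "lin f \<Longrightarrow> f (vneg x) = - f x"
  unfolding vneg_as lin_def by simp

lemma linop_vsub: "linop w \<Longrightarrow> w (vsub x y) = vsub (w x) (w y)"
  unfolding vsub_as linop_def by simp

lemma linop_neg: "linop w \<Longrightarrow> w (vneg x) = vneg (w x)"
  unfolding vneg_as linop_def by simp

lemma lin_comp: "lin f \<Longrightarrow> linop w \<Longrightarrow> lin (f \<circ> w)"
  by (simp add: lin_def linop_def)

lemma linop_comp: "linop f \<Longrightarrow> linop w \<Longrightarrow> linop (f \<circ> w)"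
  by (simp add: linop_def)

lemma lin_lincomb:
  assumes lf: "lin f" and fin: "finite B"
  shows "f (lincomb k B) = (\<Sum>b\<in>B. k b * f b)"
  using fin
proof (induction B rule: finite_induct)
  case empty
  have "lincomb k {} = (\<lambda>_. 0)" by (simp add: lincomb_def)
  then show ?case using lin_zero[OF lf] by simp
next
  case (insert x F)
  have "lincomb k (insert x F) = vadd (vscale (k x) x) (lincomb k F)"
    using insert.hyps by (simp add: lincomb_def vadd_def vscale_def)
  then show ?case using insert lf by (simp add: lin_def)
qed

lemma lincomb_add: "lincomb (\<lambda>b. f b + g b) B = vadd (lincomb f B) (lincomb g B)"
  by (simp add: lincomb_def vadd_def sum.distrib ring_distribs)

lemma lincomb_neg: "lincomb (\<lambda>b. - f b) B = vneg (lincomb f B)"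
  by (simp add: lincomb_def vneg_def sum_negf)

lemma lincomb_zero: "lincomb (\<lambda>_. 0) B = (\<lambda>_. 0)"
  by (simp add: lincomb_def)

lemma lincomb_cong: "(\<And>b. b \<in> B \<Longrightarrow> f b = g b) \<Longrightarrow> lincomb f B = lincomb g B"
  by (simp add: lincomb_def)

lemma lincomb_uniq:
  assumes "lin_indep B" "lincomb f B = lincomb g B" "b \<in> B"
  shows "f b = g b"
proof -
  have "lincomb (\<lambda>b. f b - g b) B = (\<lambda>_. 0)"
    using assms(2) by (auto simp: lincomb_def sum_subtractf left_diff_distrib fun_eq_iff)
  then show ?thesis using assms(1,3) unfolding lin_indep_def by auto
qed

section \<open>Root system facts\<close>

lemma rs_D1:
  assumes "root_system R cor"
  shows "finite R"
  using assms unfolding root_system_def by (elim conjE) assumption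

lemma rs_D2:
  assumes "root_system R cor"
  shows "(\<lambda>_. 0) \<notin> R"
  using assms unfolding root_system_def by (elim conjE) assumption

lemma rs_D3:
  assumes "root_system R cor"
  shows "\<forall>\<xi>. \<exists>c. \<xi> = lincomb c R"
  using assms unfolding root_system_def by (elim conjE) assumption

lemma rs_D4:
  assumes "root_system R cor"
  shows "\<forall>\<alpha>\<in>R. (\<forall>x y. cor \<alpha> (vadd x y) = cor \<alpha> x + cor \<alpha> y) \<and>
              (\<forall>c x. cor \<alpha> (vscale c x) = c * cor \<alpha> x) \<and> cor \<alpha> \<alpha> = 2"
  using assms unfolding root_system_def by (elim conjE) assumption

lemma rs_D5:
  assumes "root_system R cor"
  shows "\<forall>\<alpha>\<in>R. \<forall>\<beta>\<in>R. refl cor \<alpha> \<beta> \<in> R"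
  using assms unfolding root_system_def by (elim conjE) assumption

lemma rs_D6:
  assumes "root_system R cor"
  shows "\<forall>\<alpha>\<in>R. \<forall>\<beta>\<in>R. \<exists>n::int. cor \<alpha> \<beta> = of_int n"
  using assms unfolding root_system_def by (elim conjE) assumption

lemma rs_lin: "root_system R cor \<Longrightarrow> \<alpha> \<in> R \<Longrightarrow> lin (cor \<alpha>)"
  using rs_D4 unfolding lin_def by blast

lemma rs_two: "root_system R cor \<Longrightarrow> \<alpha> \<in> R \<Longrightarrow> cor \<alpha> \<alpha> = 2"
  using rs_D4 by blast

lemma rs_refl: "root_system R cor \<Longrightarrow> \<alpha> \<in> R \<Longrightarrow> \<beta> \<in> R \<Longrightarrow> refl cor \<alpha> \<beta> \<in> R"
  using rs_D5 by blast

lemma rs_int: "root_system R cor \<Longrightarrow> \<alpha> \<in> R \<Longrightarrow> \<beta> \<in> R \<Longrightarrow> cor \<alpha> \<beta> \<in> \<int>"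
proof -
  assume "root_system R cor" "\<alpha> \<in> R" "\<beta> \<in> R"
  then obtain n :: int where "cor \<alpha> \<beta> = of_int n" using rs_D6 by blast
  then show ?thesis by simp
qed

lemma rs_finite: "root_system R cor \<Longrightarrow> finite R"
  by (rule rs_D1)

lemma rs_nz: "root_system R cor \<Longrightarrow> (\<lambda>_. 0) \<notin> R"
  by (rule rs_D2)

lemma rs_span: "root_system R cor \<Longrightarrow> \<exists>c. \<xi> = lincomb c R"
  using rs_D3 by blast

lemma refl_linop: "root_system R cor \<Longrightarrow> \<alpha> \<in> R \<Longrightarrow> linop (refl cor \<alpha>)"
  using rs_lin[of R cor \<alpha>]
  by (simp add: linop_def lin_def refl_def vsub_def vadd_def vscale_def fun_eq_iff algebra_simps)

lemma refl_invol: "root_system R cor \<Longrightarrow> \<alpha> \<in> R \<Longrightarrow> refl cor \<alpha> (refl cor \<alpha> x) = x"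
proof -
  assume rs: "root_system R cor" and a: "\<alpha> \<in> R"
  have l: "lin (cor \<alpha>)" using rs_lin[OF rs a] .
  have "cor \<alpha> (refl cor \<alpha> x) = cor \<alpha> x - cor \<alpha> x * 2"
    unfolding refl_def using l rs_two[OF rs a] by (simp add: lin_vsub lin_def)
  then show ?thesis
    by (simp add: refl_def vsub_def vscale_def fun_eq_iff algebra_simps)
qed

lemma refl_self: "root_system R cor \<Longrightarrow> \<alpha> \<in> R \<Longrightarrow> refl cor \<alpha> \<alpha> = vneg \<alpha>"
  using rs_two[of R cor \<alpha>]
  by (simp add: refl_def vsub_def vscale_def vneg_def fun_eq_iff algebra_simps)

lemma rs_neg: "root_system R cor \<Longrightarrow> \<alpha> \<in> R \<Longrightarrow> vneg \<alpha> \<in> R"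
  using refl_self rs_refl by metis

lemma coroot_unique:
  fixes R :: "('i \<Rightarrow> 'a::field_char_0) set"
  assumes rs: "root_system R cor" and g: "\<gamma> \<in> R" and lc: "lin c" and c2: "c \<gamma> = 2"
    and cR: "\<And>\<rho>. \<rho> \<in> R \<Longrightarrow> vsub \<rho> (vscale (c \<rho>) \<gamma>) \<in> R"
  shows "c y = cor \<gamma> y"
proof -
  define g where "g = (\<lambda>y. c y - cor \<gamma> y)"
  have lg: "lin g" using lc rs_lin[OF rs \<open>\<gamma> \<in> R\<close>] by (simp add: lin_def g_def algebra_simps)
  have g0: "g \<gamma> = 0" using c2 rs_two[OF rs \<open>\<gamma> \<in> R\<close>] by (simp add: g_def)
  have stp: "vadd \<rho> (vscale (g \<rho>) \<gamma>) \<in> R" if "\<rho> \<in> R" for \<rho>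
  proof -
    have r: "refl cor \<gamma> (vsub \<rho> (vscale (c \<rho>) \<gamma>)) \<in> R"
      using rs_refl[OF rs \<open>\<gamma> \<in> R\<close> cR[OF that]] .
    have "cor \<gamma> (vsub \<rho> (vscale (c \<rho>) \<gamma>)) = cor \<gamma> \<rho> - c \<rho> * 2"
      using rs_lin[OF rs \<open>\<gamma> \<in> R\<close>] rs_two[OF rs \<open>\<gamma> \<in> R\<close>] by (simp add: lin_vsub lin_def)
    then have "refl cor \<gamma> (vsub \<rho> (vscale (c \<rho>) \<gamma>)) = vsub (vsub \<rho> (vscale (c \<rho>) \<gamma>)) (vscale (cor \<gamma> \<rho> - c \<rho> * 2) \<gamma>)"
      by (simp only: refl_def)
    also have "\<dots> = vadd \<rho> (vscale (g \<rho>) \<gamma>)"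
      by (simp add: g_def vsub_def vadd_def vscale_def fun_eq_iff algebra_simps)
    finally have "refl cor \<gamma> (vsub \<rho> (vscale (c \<rho>) \<gamma>)) = vadd \<rho> (vscale (g \<rho>) \<gamma>)" .
    then show ?thesis using r by simp
  qed
  have iter: "vadd \<rho> (vscale (of_nat n * g \<rho>) \<gamma>) \<in> R" if "\<rho> \<in> R" for \<rho> n
  proof (induction n)
    case 0
    have "vadd \<rho> (vscale (of_nat 0 * g \<rho>) \<gamma>) = \<rho>" by (simp add: vadd_def vscale_def)
    then show ?case using that by simp
  next
    case (Suc n)
    define \<rho>' where "\<rho>' = vadd \<rho> (vscale (of_nat n * g \<rho>) \<gamma>)"
    have "g \<rho>' = g \<rho>" using lg g0 by (simp add: \<rho>'_def lin_def)
    then have "vadd \<rho>' (vscale (g \<rho>') \<gamma>) = vadd \<rho> (vscale (of_nat (Suc n) * g \<rho>) \<gamma>)"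
      by (simp add: \<rho>'_def vadd_def vscale_def fun_eq_iff algebra_simps)
    then show ?case using stp[of \<rho>'] Suc \<rho>'_def by simp
  qed
  have gz: "g \<rho> = 0" if "\<rho> \<in> R" for \<rho>
  proof (rule ccontr)
    assume nz: "g \<rho> \<noteq> 0"
    define h where "h = (\<lambda>n::nat. vadd \<rho> (vscale (of_nat n * g \<rho>) \<gamma>))"
    have "range h \<subseteq> R" using iter[OF that] by (auto simp: h_def)
    then have "finite (range h)" using rs_finite[OF rs] finite_subset by blast
    then have "\<not> inj h" using finite_imageD by fastforce
    then obtain n m where nm: "n \<noteq> m" "h n = h m" unfolding inj_def by blast
    have "\<gamma> \<noteq> (\<lambda>_. 0)" using g rs_nz[OF rs] by blast
    then obtain i where gi: "\<gamma> i \<noteq> 0" by auto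
    have "\<rho> i + of_nat n * g \<rho> * \<gamma> i = \<rho> i + of_nat m * g \<rho> * \<gamma> i"
      using fun_cong[OF nm(2), of i] by (simp add: h_def vadd_def vscale_def)
    then have "(of_nat n - of_nat m) * (g \<rho> * \<gamma> i) = (0::'a)" by (simp add: algebra_simps)
    moreover have "(of_nat n - of_nat m) \<noteq> (0::'a)" using nm(1) by simp
    ultimately show False using nz gi by simp
  qed
  obtain k where "y = lincomb k R" using rs_span[OF rs] by blast
  then have "g y = 0" using lin_lincomb[OF lg rs_finite[OF rs]] gz by simp
  then show ?thesis by (simp add: g_def)
qed



lemma cor_refl_inv:
  fixes R :: "('i \<Rightarrow> 'a::field_char_0) set"
  assumes rs: "root_system R cor" and a: "\<alpha> \<in> R" and d: "\<delta> \<in> R"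
  shows "cor (refl cor \<alpha> \<delta>) (refl cor \<alpha> x) = cor \<delta> x"
proof -
  define c where "c = (\<lambda>y. cor \<delta> (refl cor \<alpha> y))"
  have lo: "linop (refl cor \<alpha>)" using refl_linop[OF rs a] .
  have lc: "lin c" using lin_comp[OF rs_lin[OF rs d] lo] by (simp add: c_def comp_def)
  have gR: "refl cor \<alpha> \<delta> \<in> R" using rs_refl[OF rs a d] .
  have c2: "c (refl cor \<alpha> \<delta>) = 2" using refl_invol[OF rs a] rs_two[OF rs d] by (simp add: c_def)
  have cR: "vsub \<rho> (vscale (c \<rho>) (refl cor \<alpha> \<delta>)) \<in> R" if "\<rho> \<in> R" for \<rho>
  proof -
    define z where "z = refl cor \<alpha> \<rho>"
    have zR: "z \<in> R" using rs_refl[OF rs a that] by (simp add: z_def)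
    have "refl cor \<alpha> (refl cor \<delta> z) = refl cor \<alpha> (vsub z (vscale (cor \<delta> z) \<delta>))"
      by (simp add: refl_def)
    also have "\<dots> = vsub (refl cor \<alpha> z) (vscale (cor \<delta> z) (refl cor \<alpha> \<delta>))"
      using lo by (simp add: linop_vsub linop_def)
    also have "\<dots> = vsub \<rho> (vscale (c \<rho>) (refl cor \<alpha> \<delta>))"
      by (simp add: z_def c_def refl_invol[OF rs a])
    finally show ?thesis using rs_refl[OF rs a rs_refl[OF rs d zR]] by simp
  qed
  have "c (refl cor \<alpha> x) = cor (refl cor \<alpha> \<delta>) (refl cor \<alpha> x)"
    using coroot_unique[OF rs gR lc c2 cR] by blast
  then show ?thesis by (simp add: c_def refl_invol[OF rs a])
qed

lemma cor_neg:
  fixes R :: "('i \<Rightarrow> 'a::field_char_0) set"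
  assumes rs: "root_system R cor" and a: "\<alpha> \<in> R"
  shows "cor (vneg \<alpha>) y = - cor \<alpha> y"
proof -
  have nR: "vneg \<alpha> \<in> R" using rs_neg[OF rs a] .
  have lc: "lin (\<lambda>y. - cor \<alpha> y)" using rs_lin[OF rs a] by (simp add: lin_def)
  have c2: "- cor \<alpha> (vneg \<alpha>) = 2" using rs_lin[OF rs a] rs_two[OF rs a] by (simp add: lin_neg)
  have cR: "vsub \<rho> (vscale (- cor \<alpha> \<rho>) (vneg \<alpha>)) \<in> R" if "\<rho> \<in> R" for \<rho>
  proof -
    have "vsub \<rho> (vscale (- cor \<alpha> \<rho>) (vneg \<alpha>)) = refl cor \<alpha> \<rho>"
      by (simp add: refl_def vsub_def vscale_def vneg_def)
    then show ?thesis using rs_refl[OF rs a that] by simp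
  qed
  show ?thesis using coroot_unique[OF rs nR lc c2 cR] by simp
qed

lemma weyl_props:
  fixes R :: "('i \<Rightarrow> 'a::field_char_0) set"
  assumes rs: "root_system R cor" and w: "w \<in> weyl R cor"
  shows "linop w \<and> (\<forall>\<gamma>\<in>R. w \<gamma> \<in> R) \<and> bij w \<and> (\<forall>\<gamma>\<in>R. \<forall>x. cor (w \<gamma>) (w x) = cor \<gamma> x)"
  using w
proof (induction rule: weyl.induct)
  case weyl_id
  show ?case using bij_id[unfolded id_def] by (simp add: linop_def)
next
  case (weyl_step w \<alpha>)
  have b: "bij (refl cor \<alpha>)"
    by (rule o_bij[where g = "refl cor \<alpha>"]) (auto simp: fun_eq_iff refl_invol[OF rs weyl_step.hyps(2)])
  have l: "linop (refl cor \<alpha> \<circ> w)" using linop_comp[OF refl_linop[OF rs weyl_step.hyps(2)]] weyl_step.IH by blast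
  have bb: "bij (refl cor \<alpha> \<circ> w)" using bij_comp[OF _ b] weyl_step.IH by blast
  have m: "\<forall>\<gamma>\<in>R. (refl cor \<alpha> \<circ> w) \<gamma> \<in> R"
    using weyl_step.IH rs_refl[OF rs weyl_step.hyps(2)] by simp
  have c: "\<forall>\<gamma>\<in>R. \<forall>x. cor ((refl cor \<alpha> \<circ> w) \<gamma>) ((refl cor \<alpha> \<circ> w) x) = cor \<gamma> x"
  proof (intro ballI allI)
    fix \<gamma> x assume "\<gamma> \<in> R"
    then have "w \<gamma> \<in> R" using weyl_step.IH by blast
    then have "cor (refl cor \<alpha> (w \<gamma>)) (refl cor \<alpha> (w x)) = cor (w \<gamma>) (w x)"
      using cor_refl_inv[OF rs weyl_step.hyps(2)] by blast
    then show "cor ((refl cor \<alpha> \<circ> w) \<gamma>) ((refl cor \<alpha> \<circ> w) x) = cor \<gamma> x"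
      using weyl_step.IH \<open>\<gamma> \<in> R\<close> by simp
  qed
  show ?case using l bb m c by blast
qed

lemma weyl_comp:
  assumes u: "u \<in> weyl R cor" and v: "v \<in> weyl R cor"
  shows "u \<circ> v \<in> weyl R cor"
  using u
proof (induction rule: weyl.induct)
  case weyl_id
  then show ?case using v by simp
next
  case (weyl_step w \<alpha>)
  have "refl cor \<alpha> \<circ> (w \<circ> v) \<in> weyl R cor" using weyl.weyl_step[OF weyl_step.IH weyl_step.hyps(2)] .
  then show ?case by (simp add: comp_def)
qed

section \<open>Positive systems\<close>

locale possys =
  fixes R :: "('i \<Rightarrow> 'a::field_char_0) set" and cor and P and B
  assumes rs: "root_system R cor" and base: "is_base R B"
    and Pdef: "P = {\<alpha>\<in>R. \<exists>c::('i \<Rightarrow> 'a) \<Rightarrow> nat. \<alpha> = lincomb (\<lambda>b. of_nat (c b)) B}"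
begin

lemma BR: "B \<subseteq> R" and li: "lin_indep B" and finB: "finite B"
  using base unfolding is_base_def lin_indep_def by auto

lemma PR: "P \<subseteq> R" using Pdef by auto

lemma finP: "finite P" using PR rs_finite[OF rs] finite_subset by blast

lemma P_or_neg: "\<alpha> \<in> R \<Longrightarrow> \<alpha> \<in> P \<or> vneg \<alpha> \<in> P"
proof -
  assume a: "\<alpha> \<in> R"
  then obtain c :: "('i \<Rightarrow> 'a) \<Rightarrow> nat" where
    "\<alpha> = lincomb (\<lambda>b. of_nat (c b)) B \<or> \<alpha> = lincomb (\<lambda>b. - of_nat (c b)) B"
    using base unfolding is_base_def by blast
  then show ?thesis
  proof
    assume "\<alpha> = lincomb (\<lambda>b. of_nat (c b)) B" then show ?thesis using a Pdef by blast
  next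
    assume "\<alpha> = lincomb (\<lambda>b. - of_nat (c b)) B"
    then have "vneg \<alpha> = lincomb (\<lambda>b. of_nat (c b)) B"
      by (simp add: lincomb_neg vneg_def)
    then show ?thesis using rs_neg[OF rs a] Pdef by blast
  qed
qed

lemma P_not_neg: "\<alpha> \<in> P \<Longrightarrow> vneg \<alpha> \<notin> P"
proof
  assume a: "\<alpha> \<in> P" and n: "vneg \<alpha> \<in> P"
  obtain c :: "('i \<Rightarrow> 'a) \<Rightarrow> nat" where c: "\<alpha> = lincomb (\<lambda>b. of_nat (c b)) B" using a Pdef by blast
  obtain d :: "('i \<Rightarrow> 'a) \<Rightarrow> nat" where d: "vneg \<alpha> = lincomb (\<lambda>b. of_nat (d b)) B" using n Pdef by blast
  have "lincomb (\<lambda>b. of_nat (c b + d b)) B = vadd \<alpha> (vneg \<alpha>)"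
    using c d by (simp add: lincomb_add[symmetric])
  also have "\<dots> = lincomb (\<lambda>_. 0) B" by (simp add: lincomb_zero vadd_def vneg_def)
  finally have "\<forall>b\<in>B. (of_nat (c b + d b) :: 'a) = 0" using lincomb_uniq[OF li] by blast
  then have "\<forall>b\<in>B. (of_nat (c b) :: 'a) = 0" by (metis add_is_0 of_nat_0 of_nat_eq_0_iff)
  then have "\<alpha> = lincomb (\<lambda>_. 0) B" using c lincomb_cong by metis
  then have "\<alpha> = (\<lambda>_. 0)" by (simp add: lincomb_zero)
  then show False using a PR rs_nz[OF rs] by blast
qed

lemma P_add: "\<alpha> \<in> P \<Longrightarrow> \<beta> \<in> P \<Longrightarrow> vadd \<alpha> \<beta> \<in> R \<Longrightarrow> vadd \<alpha> \<beta> \<in> P"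
proof -
  assume a: "\<alpha> \<in> P" and b: "\<beta> \<in> P" and r: "vadd \<alpha> \<beta> \<in> R"
  obtain c :: "('i \<Rightarrow> 'a) \<Rightarrow> nat" where c: "\<alpha> = lincomb (\<lambda>b. of_nat (c b)) B" using a Pdef by blast
  obtain d :: "('i \<Rightarrow> 'a) \<Rightarrow> nat" where d: "\<beta> = lincomb (\<lambda>b. of_nat (d b)) B" using b Pdef by blast
  have "vadd \<alpha> \<beta> = lincomb (\<lambda>b. of_nat (c b + d b)) B"
    using c d by (simp add: lincomb_add[symmetric])
  then have "\<exists>e::('i \<Rightarrow> 'a) \<Rightarrow> nat. vadd \<alpha> \<beta> = lincomb (\<lambda>b. of_nat (e b)) B"
    by (rule exI[where x="\<lambda>b. c b + d b"])
  then show ?thesis using r Pdef by blast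
qed

lemma pos_induct:
  assumes QP: "Q \<subseteq> P"
    and base_case: "\<And>\<alpha>. \<alpha> \<in> simple_roots Q \<Longrightarrow> X \<alpha>"
    and step: "\<And>\<beta> \<gamma>. \<beta> \<in> Q \<Longrightarrow> \<gamma> \<in> Q \<Longrightarrow> vadd \<beta> \<gamma> \<in> Q \<Longrightarrow> X \<beta> \<Longrightarrow> X \<gamma> \<Longrightarrow> X (vadd \<beta> \<gamma>)"
  shows "\<alpha> \<in> Q \<Longrightarrow> X \<alpha>"
proof -
  have main: "\<forall>\<alpha> c. \<alpha> \<in> Q \<longrightarrow> \<alpha> = lincomb (\<lambda>b. of_nat (c b)) B \<longrightarrow> sum c B = n \<longrightarrow> X \<alpha>" for n
  proof (induction n rule: less_induct)
    case (less n)
    show ?case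
    proof (intro allI impI)
      fix \<alpha> and c :: "('i \<Rightarrow> 'a) \<Rightarrow> nat"
      assume aQ: "\<alpha> \<in> Q" and ac: "\<alpha> = lincomb (\<lambda>b. of_nat (c b)) B" and sn: "sum c B = n"
      show "X \<alpha>"
      proof (cases "\<alpha> \<in> simple_roots Q")
        case True then show ?thesis using base_case by blast
      next
        case False
        then obtain \<beta> \<gamma> where bQ: "\<beta> \<in> Q" and gQ: "\<gamma> \<in> Q" and eq: "\<alpha> = vadd \<beta> \<gamma>"
          using aQ unfolding simple_roots_def by blast
        obtain d :: "('i \<Rightarrow> 'a) \<Rightarrow> nat" where d: "\<beta> = lincomb (\<lambda>b. of_nat (d b)) B" using bQ QP Pdef by blast
        obtain e :: "('i \<Rightarrow> 'a) \<Rightarrow> nat" where e: "\<gamma> = lincomb (\<lambda>b. of_nat (e b)) B" using gQ QP Pdef by blast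
        have "lincomb (\<lambda>b. of_nat (c b)) B = lincomb (\<lambda>b. of_nat (d b + e b)) B"
          using ac eq d e by (simp add: lincomb_add[symmetric])
        then have "\<forall>b\<in>B. (of_nat (c b) :: 'a) = of_nat (d b + e b)" using lincomb_uniq[OF li] by blast
        then have cde: "\<forall>b\<in>B. c b = d b + e b" by (metis of_nat_eq_iff)
        then have sum_eq: "sum c B = sum d B + sum e B" by (simp add: sum.distrib)
        have pos: "sum f B > 0" if "\<phi> \<in> Q" "\<phi> = lincomb (\<lambda>b. of_nat (f b)) B" for \<phi> and f :: "('i \<Rightarrow> 'a) \<Rightarrow> nat"
        proof (rule ccontr)
          assume "\<not> sum f B > 0"
          then have "\<forall>b\<in>B. f b = 0" using finB by simp
          then have "\<phi> = lincomb (\<lambda>_. 0) B" using that(2) lincomb_cong[of B "\<lambda>b. of_nat (f b)" "\<lambda>_. 0"] by simp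
          then have "\<phi> = (\<lambda>_. 0)" by (simp add: lincomb_zero)
          then show False using that(1) QP PR rs_nz[OF rs] by blast
        qed
        have "sum d B < n" using pos[OF gQ e] sum_eq sn by simp
        then have Xb: "X \<beta>" using less.IH bQ d by blast
        have "sum e B < n" using pos[OF bQ d] sum_eq sn by simp
        then have Xg: "X \<gamma>" using less.IH gQ e by blast
        show ?thesis using step[OF bQ gQ _ Xb Xg] eq aQ by simp
      qed
    qed
  qed
  assume aQ: "\<alpha> \<in> Q"
  then obtain c :: "('i \<Rightarrow> 'a) \<Rightarrow> nat" where "\<alpha> = lincomb (\<lambda>b. of_nat (c b)) B" using QP Pdef by blast
  then show "X \<alpha>" using main aQ by blast
qed

end



lemma vadd_vsub_cancel: "vadd (vsub y r) r = y" and vsub_vadd_cancel: "vsub (vadd y r) r = y"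
  by (simp_all add: vadd_def vsub_def)

lemma vneg_vneg: "vneg (vneg x) = x" by (simp add: vneg_def)

lemma simple_iff: "x \<in> simple_roots X \<longleftrightarrow> x \<in> X \<and> (\<forall>\<beta>\<in>X. \<forall>\<gamma>\<in>X. x \<noteq> vadd \<beta> \<gamma>)"
  unfolding simple_roots_def by blast

lemma simple_transport:
  assumes inj: "inj v" and add: "\<And>x y. v (vadd x y) = vadd (v x) (v y)"
  shows "simple_roots (v ` X) = v ` simple_roots X"
proof (rule set_eqI)
  fix y
  show "y \<in> simple_roots (v ` X) \<longleftrightarrow> y \<in> v ` simple_roots X"
  proof
    assume y: "y \<in> simple_roots (v ` X)"
    then have yX: "y \<in> v ` X" and nd: "\<And>\<beta> \<gamma>. \<beta> \<in> v ` X \<Longrightarrow> \<gamma> \<in> v ` X \<Longrightarrow> y \<noteq> vadd \<beta> \<gamma>"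
      using y unfolding simple_iff by auto
    from yX obtain \<alpha> where a: "\<alpha> \<in> X" "y = v \<alpha>" by blast
    have "\<alpha> \<noteq> vadd \<beta> \<gamma>" if "\<beta> \<in> X" "\<gamma> \<in> X" for \<beta> \<gamma>
    proof
      assume "\<alpha> = vadd \<beta> \<gamma>"
      then have "y = vadd (v \<beta>) (v \<gamma>)" using a add by simp
      moreover have "v \<beta> \<in> v ` X" "v \<gamma> \<in> v ` X" using that by simp_all
      ultimately show False using nd by blast
    qed
    then have "\<alpha> \<in> simple_roots X" using a(1) unfolding simple_iff by blast
    then show "y \<in> v ` simple_roots X" using a(2) by blast
  next
    assume "y \<in> v ` simple_roots X"
    then obtain \<alpha> where a: "\<alpha> \<in> simple_roots X" "y = v \<alpha>" by blast
    have aX: "\<alpha> \<in> X" and nd: "\<And>\<beta> \<gamma>. \<beta> \<in> X \<Longrightarrow> \<gamma> \<in> X \<Longrightarrow> \<alpha> \<noteq> vadd \<beta> \<gamma>"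
      using a(1) unfolding simple_iff by auto
    have "y \<noteq> vadd \<beta>' \<gamma>'" if bx: "\<beta>' \<in> v ` X" and gx: "\<gamma>' \<in> v ` X" for \<beta>' \<gamma>'
    proof
      assume e: "y = vadd \<beta>' \<gamma>'"
      obtain \<beta> where b: "\<beta> \<in> X" "\<beta>' = v \<beta>" using bx by blast
      obtain \<gamma> where g: "\<gamma> \<in> X" "\<gamma>' = v \<gamma>" using gx by blast
      have "v \<alpha> = v (vadd \<beta> \<gamma>)" using e a(2) b(2) g(2) add by simp
      then have "\<alpha> = vadd \<beta> \<gamma>" using inj by (simp add: inj_eq)
      then show False using nd b(1) g(1) by blast
    qed
    moreover have "y \<in> v ` X" using aX a(2) by blast
    ultimately show "y \<in> simple_roots (v ` X)" unfolding simple_iff by blast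
  qed
qed

context possys begin

lemma rho_int:
  assumes w: "w \<in> weyl R cor" and b: "\<beta> \<in> R"
  shows "cor \<beta> (rho P) - cor \<beta> (w (rho P)) \<in> \<int>"
proof -
  have wp: "linop w \<and> (\<forall>\<gamma>\<in>R. w \<gamma> \<in> R) \<and> bij w" using weyl_props[OF rs w] by blast
  then have lw: "linop w" and mR: "\<And>\<gamma>. \<gamma> \<in> R \<Longrightarrow> w \<gamma> \<in> R" and iw: "inj w"
    by (auto simp: bij_def)
  define f where "f = cor \<beta>"
  have lf: "lin f" using rs_lin[OF rs b] by (simp add: f_def)
  have lfw: "lin (f \<circ> w)" using lin_comp[OF lf lw] .
  have rho_lc: "rho P = lincomb (\<lambda>_. 1/2) P"
    by (simp add: rho_def lincomb_def fun_eq_iff sum_divide_distrib)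
  have s1: "f (rho P) = (\<Sum>\<alpha>\<in>P. 1/2 * f \<alpha>)" using lin_lincomb[OF lf finP] rho_lc by simp
  have s2: "f (w (rho P)) = (\<Sum>\<alpha>\<in>P. 1/2 * f (w \<alpha>))" using lin_lincomb[OF lfw finP] rho_lc by simp
  define \<phi> where "\<phi> = (\<lambda>\<alpha>. if w \<alpha> \<in> P then w \<alpha> else vneg (w \<alpha>))"
  have phiP: "\<phi> ` P \<subseteq> P"
  proof
    fix y assume "y \<in> \<phi> ` P"
    then obtain \<alpha> where "\<alpha> \<in> P" "y = \<phi> \<alpha>" by blast
    then show "y \<in> P" using P_or_neg[OF mR] PR by (auto simp: \<phi>_def)
  qed
  have phiinj: "inj_on \<phi> P"
  proof (rule inj_onI)
    fix a b assume a: "a \<in> P" and b: "b \<in> P" and e: "\<phi> a = \<phi> b"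
    show "a = b"
    proof (cases "w a \<in> P"; cases "w b \<in> P")
      assume "w a \<in> P" "w b \<in> P"
      then show ?thesis using e iw by (simp add: \<phi>_def inj_eq)
    next
      assume "w a \<in> P" "w b \<notin> P"
      then have "w a = w (vneg b)" using e lw by (simp add: \<phi>_def linop_neg)
      then have "a = vneg b" using iw by (simp add: inj_eq)
      then show ?thesis using P_not_neg[OF b] a by simp
    next
      assume "w a \<notin> P" "w b \<in> P"
      then have "w b = w (vneg a)" using e lw by (simp add: \<phi>_def linop_neg)
      then have "b = vneg a" using iw by (simp add: inj_eq)
      then show ?thesis using P_not_neg[OF a] b by simp
    next
      assume "w a \<notin> P" "w b \<notin> P"
      then have "vneg (w a) = vneg (w b)" using e by (simp add: \<phi>_def)
      then have "w a = w b" by (metis vneg_vneg)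
      then show ?thesis using iw by (simp add: inj_eq)
    qed
  qed
  have phieq: "\<phi> ` P = P" using endo_inj_surj[OF finP phiP phiinj] .
  have "(\<Sum>\<alpha>\<in>P. 1/2 * f \<alpha>) = (\<Sum>\<alpha>\<in>\<phi> ` P. 1/2 * f \<alpha>)" using phieq by simp
  also have "\<dots> = (\<Sum>\<alpha>\<in>P. 1/2 * f (\<phi> \<alpha>))" using sum.reindex[OF phiinj] by simp
  finally have s1': "f (rho P) = (\<Sum>\<alpha>\<in>P. 1/2 * f (\<phi> \<alpha>))" using s1 by simp
  have "f (rho P) - f (w (rho P)) = (\<Sum>\<alpha>\<in>P. 1/2 * f (\<phi> \<alpha>) - 1/2 * f (w \<alpha>))"
    using s1' s2 by (simp add: sum_subtractf)
  also have "\<dots> = (\<Sum>\<alpha>\<in>P. if w \<alpha> \<in> P then 0 else f (\<phi> \<alpha>))"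
  proof (rule sum.cong)
    fix \<alpha> assume "\<alpha> \<in> P"
    show "1/2 * f (\<phi> \<alpha>) - 1/2 * f (w \<alpha>) = (if w \<alpha> \<in> P then 0 else f (\<phi> \<alpha>))"
      using lin_neg[OF lf] by (simp add: \<phi>_def)
  qed simp
  also have "\<dots> \<in> \<int>"
  proof (rule Ints_sum)
    fix \<alpha> assume "\<alpha> \<in> P"
    then have "\<phi> \<alpha> \<in> R" using phiP PR by blast
    then show "(if w \<alpha> \<in> P then 0 else f (\<phi> \<alpha>)) \<in> \<int>" using rs_int[OF rs b] by (simp add: f_def)
  qed
  finally show ?thesis by (simp add: f_def)
qed

end



theorem mainTheorem18:
  fixes R :: "('i::finite \<Rightarrow> 'a::field_char_0) set"
    and cor :: "('i \<Rightarrow> 'a) \<Rightarrow> ('i \<Rightarrow> 'a) \<Rightarrow> 'a"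
    and P :: "('i \<Rightarrow> 'a) set"
    and \<Omega> \<Omega>\<^sub>1 :: "(('i \<Rightarrow> 'a) \<Rightarrow> 'a) set"
    and v u :: "('i \<Rightarrow> 'a) \<Rightarrow> ('i \<Rightarrow> 'a)"
  assumes "alg_closed TYPE('a)"
    and "root_system R cor"
    and "positive_system R P"
    and "prime_ideal \<Omega>"
    and "prime_ideal \<Omega>\<^sub>1"
    and "\<Omega>\<^sub>1 = dotf P v ` \<Omega>"
    and "v \<in> W_lam R cor P \<Omega>"
  shows "B_lam R cor P \<Omega>\<^sub>1 = v ` B_lam R cor P \<Omega>
     \<and> (u \<in> W_lam R cor P \<Omega>\<^sub>1 \<longrightarrow> u \<circ> v \<in> W_lam R cor P \<Omega>)"
proof -
  note rs = assms(2)
  obtain B where bB: "is_base R B"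
    and Pdef: "P = {\<alpha>\<in>R. \<exists>c::('i \<Rightarrow> 'a) \<Rightarrow> nat. \<alpha> = lincomb (\<lambda>b. of_nat (c b)) B}"
    using assms(3) unfolding positive_system_def by blast
  interpret ps: possys R cor P B using rs bB Pdef by unfold_locales
  have vW: "v \<in> weyl R cor" and vB: "v ` B_lam R cor P \<Omega> \<subseteq> P"
    using assms(7) unfolding W_lam_def by blast+
  have wp: "linop v \<and> (\<forall>\<gamma>\<in>R. v \<gamma> \<in> R) \<and> bij v \<and> (\<forall>\<gamma>\<in>R. \<forall>x. cor (v \<gamma>) (v x) = cor \<gamma> x)"
    using weyl_props[OF rs vW] .
  then have lv: "linop v" and mv: "\<And>\<gamma>. \<gamma> \<in> R \<Longrightarrow> v \<gamma> \<in> R" and bv: "bij v"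
    and iv: "\<And>\<gamma> x. \<gamma> \<in> R \<Longrightarrow> cor (v \<gamma>) (v x) = cor \<gamma> x" by blast+
  have injv: "inj v" and surjv: "surj v" using bv by (auto simp: bij_def)
  have vR: "v ` R = R"
    using endo_inj_surj[OF rs_finite[OF rs] _ inj_on_subset[OF injv]] mv by blast
  define \<rho> where "\<rho> = rho P"
  have kint: "\<exists>k::int. cor \<alpha> \<rho> - cor \<alpha> (v \<rho>) = of_int k" if "\<alpha> \<in> R" for \<alpha>
    using ps.rho_int[OF vW that] unfolding \<rho>_def by (auto elim: Ints_cases)
  define Rl where "Rl = integral_roots R cor \<Omega>"
  define Rl1 where "Rl1 = integral_roots R cor \<Omega>\<^sub>1"
  have A: "v \<gamma> \<in> Rl1" if hyp: "\<gamma> \<in> Rl" for \<gamma>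
  proof -
    obtain n :: int where gR: "\<gamma> \<in> R" and gn: "(\<lambda>\<xi>. cor \<gamma> \<xi> - of_int n) \<in> \<Omega>"
      using hyp unfolding Rl_def integral_roots_def by blast
    define \<alpha> where "\<alpha> = v \<gamma>"
    have aR: "\<alpha> \<in> R" using mv[OF gR] by (simp add: \<alpha>_def)
    obtain k :: int where k: "cor \<alpha> \<rho> - cor \<alpha> (v \<rho>) = of_int k" using kint[OF aR] by blast
    have la: "lin (cor \<alpha>)" using rs_lin[OF rs aR] .
    have lg: "lin (cor \<gamma>)" using rs_lin[OF rs gR] .
    have ci: "cor \<gamma> (inv v y) = cor \<alpha> y" for y
      using iv[OF gR, of "inv v y"] surj_f_inv_f[OF surjv] by (simp add: \<alpha>_def)
    have cr: "cor \<gamma> \<rho> = cor \<alpha> (v \<rho>)" using iv[OF gR] by (simp add: \<alpha>_def)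
    have eq: "dotf P v (\<lambda>\<xi>. cor \<gamma> \<xi> - of_int n) = (\<lambda>\<xi>. cor \<alpha> \<xi> - of_int (n - k))"
    proof
      fix \<xi>
      have "dotf P v (\<lambda>\<xi>. cor \<gamma> \<xi> - of_int n) \<xi> = cor \<gamma> (vsub (inv v (vadd \<xi> \<rho>)) \<rho>) - of_int n"
        by (simp add: dotf_def dot_def \<rho>_def)
      also have "\<dots> = cor \<alpha> \<xi> + cor \<alpha> \<rho> - cor \<alpha> (v \<rho>) - of_int n"
        using lin_vsub[OF lg] ci la cr by (simp add: lin_def)
      also have "\<dots> = cor \<alpha> \<xi> - of_int (n - k)" using k by simp
      finally show "dotf P v (\<lambda>\<xi>. cor \<gamma> \<xi> - of_int n) \<xi> = cor \<alpha> \<xi> - of_int (n - k)" .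
    qed
    have "(\<lambda>\<xi>. cor \<alpha> \<xi> - of_int (n - k)) \<in> dotf P v ` \<Omega>" by (rule image_eqI[where f="dotf P v", OF eq[symmetric] gn])
    then have "(\<lambda>\<xi>. cor \<alpha> \<xi> - of_int (n - k)) \<in> \<Omega>\<^sub>1" using assms(6) by simp
    then show ?thesis using aR unfolding Rl1_def integral_roots_def \<alpha>_def by blast
  qed
  have dinv: "dot P (inv v) (dot P v \<eta>) = \<eta>" for \<eta>
    unfolding dot_def vadd_vsub_cancel inv_f_f[OF injv] vsub_vadd_cancel by (rule refl)
  have Bs: "\<alpha> \<in> v ` Rl" if hyp: "\<alpha> \<in> Rl1" for \<alpha>
  proof -
    obtain n :: int where aR: "\<alpha> \<in> R" and an: "(\<lambda>\<xi>. cor \<alpha> \<xi> - of_int n) \<in> \<Omega>\<^sub>1"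
      using hyp unfolding Rl1_def integral_roots_def by blast
    have an': "(\<lambda>\<xi>. cor \<alpha> \<xi> - of_int n) \<in> dotf P v ` \<Omega>" using an by (simp only: assms(6))
    obtain f where fO: "f \<in> \<Omega>" and fd': "(\<lambda>\<xi>. cor \<alpha> \<xi> - of_int n) = dotf P v f"
      using an' by (rule imageE)
    note fd = fd'[symmetric]
    have "\<alpha> \<in> v ` R" using aR by (simp only: vR)
    then obtain \<gamma> where ag: "\<alpha> = v \<gamma>" and gR: "\<gamma> \<in> R" by (rule imageE)
    obtain k :: int where k: "cor \<alpha> \<rho> - cor \<alpha> (v \<rho>) = of_int k" using kint[OF aR] by blast
    have la: "lin (cor \<alpha>)" using rs_lin[OF rs aR] .
    have lg: "lin (cor \<gamma>)" using rs_lin[OF rs gR] .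
    have cr: "cor \<gamma> \<rho> = cor \<alpha> (v \<rho>)" using iv[OF gR] by (simp add: ag)
    have cv: "cor \<alpha> (v y) = cor \<gamma> y" for y using iv[OF gR] by (simp add: ag)
    have "f = (\<lambda>\<eta>. cor \<gamma> \<eta> - of_int (n + k))"
    proof
      fix \<eta>
      have "f \<eta> = dotf P v f (dot P v \<eta>)" by (simp add: dotf_def dinv)
      also have "\<dots> = cor \<alpha> (vsub (v (vadd \<eta> \<rho>)) \<rho>) - of_int n"
        by (simp add: fd dot_def \<rho>_def)
      also have "\<dots> = cor \<gamma> \<eta> + cor \<gamma> \<rho> - cor \<alpha> \<rho> - of_int n"
        using lin_vsub[OF la] cv lg by (simp add: lin_def)
      also have "\<dots> = cor \<gamma> \<eta> - of_int (n + k)"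
      proof -
        have kk: "cor \<alpha> \<rho> = of_int k + cor \<alpha> (v \<rho>)" using k by (simp add: diff_eq_eq)
        show ?thesis unfolding kk cr by simp
      qed
      finally show "f \<eta> = cor \<gamma> \<eta> - of_int (n + k)" .
    qed
    then have "\<gamma> \<in> Rl" using fO gR unfolding Rl_def integral_roots_def by blast
    then show ?thesis using ag by blast
  qed
  have RlEq: "Rl1 = v ` Rl"
  proof
    show "Rl1 \<subseteq> v ` Rl" using Bs by (rule subsetI)
    show "v ` Rl \<subseteq> Rl1" using A by (rule image_subsetI)
  qed
  have negRl: "vneg \<gamma> \<in> Rl" if hyp: "\<gamma> \<in> Rl" for \<gamma>
  proof -
    obtain n :: int where gR: "\<gamma> \<in> R" and gn: "(\<lambda>\<xi>. cor \<gamma> \<xi> - of_int n) \<in> \<Omega>"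
      using hyp unfolding Rl_def integral_roots_def by blast
    have mul: "\<forall>f\<in>\<Omega>. \<forall>g\<in>polyfun. (\<lambda>\<xi>. g \<xi> * f \<xi>) \<in> \<Omega>"
      using assms(4) unfolding prime_ideal_def by blast
    have "(\<lambda>\<xi>. (\<lambda>_. (-1::'a)) \<xi> * (cor \<gamma> \<xi> - of_int n)) \<in> \<Omega>"
      by (rule mul[rule_format, OF gn polyfun.pf_const])
    moreover have "(\<lambda>\<xi>. (\<lambda>_. (-1::'a)) \<xi> * (cor \<gamma> \<xi> - of_int n)) = (\<lambda>\<xi>. cor (vneg \<gamma>) \<xi> - of_int (- n))"
      using cor_neg[OF rs gR] by (simp add: fun_eq_iff)
    ultimately have "(\<lambda>\<xi>. cor (vneg \<gamma>) \<xi> - of_int (- n)) \<in> \<Omega>" by simp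
    then show ?thesis using rs_neg[OF rs gR] unfolding Rl_def integral_roots_def by blast
  qed
  have posv: "v \<alpha> \<in> P" if hyp: "\<alpha> \<in> P \<inter> Rl" for \<alpha>
  proof (rule ps.pos_induct[where Q = "P \<inter> Rl" and X = "\<lambda>\<alpha>. v \<alpha> \<in> P"])
    show "P \<inter> Rl \<subseteq> P" by blast
  next
    fix \<alpha> assume "\<alpha> \<in> simple_roots (P \<inter> Rl)"
    then show "v \<alpha> \<in> P" using vB unfolding B_lam_def Rl_def by blast
  next
    fix \<beta> \<gamma> assume "\<beta> \<in> P \<inter> Rl" "\<gamma> \<in> P \<inter> Rl" "vadd \<beta> \<gamma> \<in> P \<inter> Rl" "v \<beta> \<in> P" "v \<gamma> \<in> P"
    moreover have "vadd \<beta> \<gamma> \<in> R" using calculation(3) ps.PR by blast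
    ultimately have "vadd (v \<beta>) (v \<gamma>) \<in> P"
      using ps.P_add[of "v \<beta>" "v \<gamma>"] mv[of "vadd \<beta> \<gamma>"] lv unfolding linop_def by simp
    then show "v (vadd \<beta> \<gamma>) \<in> P" using lv unfolding linop_def by simp
  next
    show "\<alpha> \<in> P \<inter> Rl" using hyp .
  qed
  have C: "v ` (P \<inter> Rl) = P \<inter> Rl1"
  proof
    show "v ` (P \<inter> Rl) \<subseteq> P \<inter> Rl1" using posv A by blast
  next
    show "P \<inter> Rl1 \<subseteq> v ` (P \<inter> Rl)"
    proof
      fix \<beta> assume b: "\<beta> \<in> P \<inter> Rl1"
      then obtain \<alpha> where aRl: "\<alpha> \<in> Rl" and ba: "\<beta> = v \<alpha>" using RlEq by blast
      have aR: "\<alpha> \<in> R" using aRl unfolding Rl_def integral_roots_def by blast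
      have "\<alpha> \<in> P"
      proof (rule ccontr)
        assume "\<alpha> \<notin> P"
        then have "vneg \<alpha> \<in> P" using ps.P_or_neg[OF aR] by blast
        then have "v (vneg \<alpha>) \<in> P" using posv negRl[OF aRl] by blast
        then have "vneg \<beta> \<in> P" using linop_neg[OF lv] ba by simp
        then show False using ps.P_not_neg b by blast
      qed
      then show "\<beta> \<in> v ` (P \<inter> Rl)" using aRl ba by blast
    qed
  qed
  have addv: "\<And>x y. v (vadd x y) = vadd (v x) (v y)" using lv unfolding linop_def by blast
  have D: "B_lam R cor P \<Omega>\<^sub>1 = v ` B_lam R cor P \<Omega>"
  proof -
    have "B_lam R cor P \<Omega>\<^sub>1 = simple_roots (P \<inter> Rl1)" by (simp add: B_lam_def Rl1_def)
    also have "\<dots> = simple_roots (v ` (P \<inter> Rl))" using C by simp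
    also have "\<dots> = v ` simple_roots (P \<inter> Rl)" using simple_transport[OF injv addv] .
    also have "\<dots> = v ` B_lam R cor P \<Omega>" by (simp add: B_lam_def Rl_def)
    finally show ?thesis .
  qed
  have E: "u \<circ> v \<in> W_lam R cor P \<Omega>" if hyp: "u \<in> W_lam R cor P \<Omega>\<^sub>1"
  proof -
    have uW: "u \<in> weyl R cor" and uB: "u ` B_lam R cor P \<Omega>\<^sub>1 \<subseteq> P"
      using hyp unfolding W_lam_def by blast+
    have "(u \<circ> v) ` B_lam R cor P \<Omega> = u ` B_lam R cor P \<Omega>\<^sub>1" using D by (simp add: image_comp)
    then show ?thesis using uB weyl_comp[OF uW vW] unfolding W_lam_def by simp
  qed
  show ?thesis using D E by blast
qed

end
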